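(* Let $(X,\le)$ be a poset, let $\alpha:X\to X$ be an order automorphism of $(X,\le)$ and $\beta:X\to X$ a self-inverse dual order automorphism of $(X,\le)$ with $\beta=\alpha\circ\beta\circ\alpha$. Set $1={\le}$ and $0=\alpha\circ({\le}^c)^\smile=({\le}^c)^\smile\circ\alpha$, and for $R\in\mathsf{Up}((X^2,\preceq))$ define $R'=\alpha\circ\beta\circ R^c\circ\beta$. Then $\mathbf{Dq}((X^2,\preceq))=\langle\mathsf{Up}((X^2,\preceq)),\cap,\cup,\circ,1,0,{\sim},-,'\rangle$ is a distributive quasi relation algebra.
   Context: For binary relations: converse $R^\smile=\{(x,y)\mid(y,x)\in R\}$; composition $R\circ S=\{(x,y)\mid\exists z\,((x,z)\in R,(z,y)\in S)\}$; complement $R^c=X^2\setminus R$. Functions are identified with their graphs. $X^2$ is partially ordered by $(u,v)\preceq(x,y)$ iff $x\le u$ and $v\le y$; $\mathsf{Up}((X^2,\preceq))$ is its set of up-sets. On it: $R\backslash S=(R^\smile\circ S^c)^c$, $R/S=(R^c\circ S^\smile)^c$, ${\sim}R=R\backslash0$, $-R=0/R$. Order automorphism: bijection with $x\le y\iff\alpha(x)\le\alpha(y)$; dual order automorphism: bijection with $x\le y\iff\beta(y)\le\beta(x)$; self-inverse: $\beta\circ\beta=\mathrm{id}_X$. A quasi relation algebra is an algebra $\langle A,\wedge,\vee,\cdot,1,0,{\sim},-,'\rangle$ where $\langle A,\wedge,\vee,\cdot,1\rangle$ with residuals $\backslash,/$ is a residuated lattice, $0\in A$, ${\sim}a=a\backslash0$,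 $-a=0/a$, ${\sim}{-}a={-}{\sim}a=a$, and $a''=a$, $(a\vee b)'=a'\wedge b'$, $({\sim}a)'=-(a')$, $(a\cdot b)'=a'+b'$ with $a+b={\sim}(-b\cdot-a)$; distributive means the lattice reduct is distributive. *)

theory Defs
  imports Main
begin

definition lattice_on :: "'b set \<Rightarrow> ('b \<Rightarrow> 'b \<Rightarrow> 'b) \<Rightarrow> ('b \<Rightarrow> 'b \<Rightarrow> 'b) \<Rightarrow> bool" where
  "lattice_on A meet join \<longleftrightarrow>
     (\<forall>a\<in>A. \<forall>b\<in>A. meet a b \<in> A \<and> join a b \<in> A) \<and>
     (\<forall>a\<in>A. \<forall>b\<in>A. \<forall>c\<in>A. meet (meet a b) c = meet a (meet b c) \<and> join (join a b) c = join a (join b c)) \<and>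
     (\<forall>a\<in>A. \<forall>b\<in>A. meet a b = meet b a \<and> join a b = join b a) \<and>
     (\<forall>a\<in>A. \<forall>b\<in>A. meet a (join a b) = a \<and> join a (meet a b) = a)"

definition lat_le :: "('b \<Rightarrow> 'b \<Rightarrow> 'b) \<Rightarrow> 'b \<Rightarrow> 'b \<Rightarrow> bool" where
  "lat_le meet a b \<longleftrightarrow> meet a b = a"

definition residuated_lattice_on ::
  "'b set \<Rightarrow> ('b \<Rightarrow> 'b \<Rightarrow> 'b) \<Rightarrow> ('b \<Rightarrow> 'b \<Rightarrow> 'b) \<Rightarrow> ('b \<Rightarrow> 'b \<Rightarrow> 'b) \<Rightarrow> 'b
   \<Rightarrow> ('b \<Rightarrow> 'b \<Rightarrow> 'b) \<Rightarrow> ('b \<Rightarrow> 'b \<Rightarrow> 'b) \<Rightarrow> bool" where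
  "residuated_lattice_on A meet join mult e1 ldiv rdiv \<longleftrightarrow>
     lattice_on A meet join \<and>
     e1 \<in> A \<and>
     (\<forall>a\<in>A. \<forall>b\<in>A. mult a b \<in> A \<and> ldiv a b \<in> A \<and> rdiv a b \<in> A) \<and>
     (\<forall>a\<in>A. \<forall>b\<in>A. \<forall>c\<in>A. mult (mult a b) c = mult a (mult b c)) \<and>
     (\<forall>a\<in>A. mult e1 a = a \<and> mult a e1 = a) \<and>
     (\<forall>a\<in>A. \<forall>b\<in>A. \<forall>c\<in>A.
        (lat_le meet (mult a b) c \<longleftrightarrow> lat_le meet b (ldiv a c)) \<and>
        (lat_le meet (mult a b) c \<longleftrightarrow> lat_le meet a (rdiv c b)))"

definition qra_on ::
  "'b set \<Rightarrow> ('b \<Rightarrow> 'b \<Rightarrow> 'b) \<Rightarrow> ('b \<Rightarrow> 'b \<Rightarrow> 'b) \<Rightarrow> ('b \<Rightarrow> 'b \<Rightarrow> 'b) \<Rightarrow> 'b \<Rightarrow> 'b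
   \<Rightarrow> ('b \<Rightarrow> 'b) \<Rightarrow> ('b \<Rightarrow> 'b) \<Rightarrow> ('b \<Rightarrow> 'b)
   \<Rightarrow> ('b \<Rightarrow> 'b \<Rightarrow> 'b) \<Rightarrow> ('b \<Rightarrow> 'b \<Rightarrow> 'b) \<Rightarrow> bool" where
  "qra_on A meet join mult e1 z0 lneg rneg invo ldiv rdiv \<longleftrightarrow>
     residuated_lattice_on A meet join mult e1 ldiv rdiv \<and>
     z0 \<in> A \<and>
     (\<forall>a\<in>A. lneg a = ldiv a z0 \<and> rneg a = rdiv z0 a) \<and>
     (\<forall>a\<in>A. invo a \<in> A) \<and>
     (\<forall>a\<in>A. lneg (rneg a) = a \<and> rneg (lneg a) = a) \<and>
     (\<forall>a\<in>A. invo (invo a) = a) \<and>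
     (\<forall>a\<in>A. \<forall>b\<in>A. invo (join a b) = meet (invo a) (invo b)) \<and>
     (\<forall>a\<in>A. invo (lneg a) = rneg (invo a)) \<and>
     (\<forall>a\<in>A. \<forall>b\<in>A. invo (mult a b) = lneg (mult (rneg (invo b)) (rneg (invo a))))"
  \<comment> \<open>the last clause is (a\<cdot>b)' = a' + b' with a + b = \<sim>(-b \<cdot> -a)\<close>

definition dqra_on ::
  "'b set \<Rightarrow> ('b \<Rightarrow> 'b \<Rightarrow> 'b) \<Rightarrow> ('b \<Rightarrow> 'b \<Rightarrow> 'b) \<Rightarrow> ('b \<Rightarrow> 'b \<Rightarrow> 'b) \<Rightarrow> 'b \<Rightarrow> 'b
   \<Rightarrow> ('b \<Rightarrow> 'b) \<Rightarrow> ('b \<Rightarrow> 'b) \<Rightarrow> ('b \<Rightarrow> 'b)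
   \<Rightarrow> ('b \<Rightarrow> 'b \<Rightarrow> 'b) \<Rightarrow> ('b \<Rightarrow> 'b \<Rightarrow> 'b) \<Rightarrow> bool" where
  "dqra_on A meet join mult e1 z0 lneg rneg invo ldiv rdiv \<longleftrightarrow>
     qra_on A meet join mult e1 z0 lneg rneg invo ldiv rdiv \<and>
     (\<forall>a\<in>A. \<forall>b\<in>A. \<forall>c\<in>A. meet a (join b c) = join (meet a b) (meet a c))"

definition rcomp :: "'a set \<Rightarrow> ('a \<times> 'a) set \<Rightarrow> ('a \<times> 'a) set" where
  "rcomp X R = (X \<times> X) - R"

text \<open>Functions are identified with their graphs (on X).\<close>
definition fgraph :: "'a set \<Rightarrow> ('a \<Rightarrow> 'a) \<Rightarrow> ('a \<times> 'a) set" where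
  "fgraph X f = {(x, f x) | x. x \<in> X}"

definition sq_le :: "('a \<times> 'a) set \<Rightarrow> 'a \<times> 'a \<Rightarrow> 'a \<times> 'a \<Rightarrow> bool" where
  "sq_le le p q \<longleftrightarrow> (fst q, fst p) \<in> le \<and> (snd p, snd q) \<in> le"

definition Up :: "'a set \<Rightarrow> ('a \<times> 'a) set \<Rightarrow> ('a \<times> 'a) set set" where
  "Up X le = {R. R \<subseteq> X \<times> X \<and> (\<forall>p\<in>R. \<forall>q\<in>X \<times> X. sq_le le p q \<longrightarrow> q \<in> R)}"

definition order_automorphism :: "'a set \<Rightarrow> ('a \<times> 'a) set \<Rightarrow> ('a \<Rightarrow> 'a) \<Rightarrow> bool" where
  "order_automorphism X le \<alpha> \<longleftrightarrow> bij_betw \<alpha> X X \<and>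
     (\<forall>x\<in>X. \<forall>y\<in>X. (x, y) \<in> le \<longleftrightarrow> (\<alpha> x, \<alpha> y) \<in> le)"

definition dual_order_automorphism :: "'a set \<Rightarrow> ('a \<times> 'a) set \<Rightarrow> ('a \<Rightarrow> 'a) \<Rightarrow> bool" where
  "dual_order_automorphism X le \<beta> \<longleftrightarrow> bij_betw \<beta> X X \<and>
     (\<forall>x\<in>X. \<forall>y\<in>X. (x, y) \<in> le \<longleftrightarrow> (\<beta> y, \<beta> x) \<in> le)"

definition self_inverse :: "'a set \<Rightarrow> ('a \<Rightarrow> 'a) \<Rightarrow> bool" where
  "self_inverse X \<beta> \<longleftrightarrow> (\<forall>x\<in>X. \<beta> (\<beta> x) = x)"

definition rel_ldiv :: "'a set \<Rightarrow> ('a \<times> 'a) set \<Rightarrow> ('a \<times> 'a) set \<Rightarrow> ('a \<times> 'a) set" where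
  "rel_ldiv X R S = rcomp X (R\<inverse> O rcomp X S)"

definition rel_rdiv :: "'a set \<Rightarrow> ('a \<times> 'a) set \<Rightarrow> ('a \<times> 'a) set \<Rightarrow> ('a \<times> 'a) set" where
  "rel_rdiv X R S = rcomp X (rcomp X R O S\<inverse>)"

end

theory Submission
  imports Defs
begin

lemma rcomp_mem: "p \<in> rcomp X R \<longleftrightarrow> p \<in> X \<times> X \<and> p \<notin> R"
  by (auto simp: rcomp_def)

lemma fgraph_mem: "(x, y) \<in> fgraph X f \<longleftrightarrow> x \<in> X \<and> y = f x"
  by (auto simp: fgraph_def)

lemma Up_mem: "R \<in> Up X le \<longleftrightarrow> R \<subseteq> X \<times> X \<and>
   (\<forall>x y u v. (u, v) \<in> R \<longrightarrow> x \<in> X \<longrightarrow> y \<in> X \<longrightarrow> (x, u) \<in> le \<longrightarrow> (v, y) \<in> le \<longrightarrow> (x, y) \<in> R)"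
  unfolding Up_def sq_le_def by auto

lemma lat_le_eq: "lat_le (\<inter>) A B \<longleftrightarrow> A \<subseteq> B"
  by (auto simp: lat_le_def)

lemma ldiv_mem: "(x, y) \<in> rel_ldiv X R S \<longleftrightarrow> x \<in> X \<and> y \<in> X \<and> (\<forall>z. (z, x) \<in> R \<longrightarrow> z \<in> X \<longrightarrow> (z, y) \<in> S)"
  by (auto simp: rel_ldiv_def rcomp_def)

lemma rdiv_mem: "(x, y) \<in> rel_rdiv X R S \<longleftrightarrow> x \<in> X \<and> y \<in> X \<and> (\<forall>z. (y, z) \<in> S \<longrightarrow> z \<in> X \<longrightarrow> (x, z) \<in> R)"
  by (auto simp: rel_rdiv_def rcomp_def)

locale setting =
  fixes X :: "'a set" and le :: "('a \<times> 'a) set" and \<alpha> \<beta> :: "'a \<Rightarrow> 'a"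
  assumes poset: "le \<subseteq> X \<times> X" "partial_order_on X le"
    and alpha: "order_automorphism X le \<alpha>"
    and beta: "dual_order_automorphism X le \<beta>" "self_inverse X \<beta>"
    and beta_eq: "fgraph X \<beta> = fgraph X \<alpha> O fgraph X \<beta> O fgraph X \<alpha>"
begin

definition Z where "Z = fgraph X \<alpha> O (rcomp X le)\<inverse>"
definition ai where "ai = inv_into X \<alpha>"
definition inv where "inv R = fgraph X \<alpha> O fgraph X \<beta> O rcomp X R O fgraph X \<beta>"

lemma refl: "x \<in> X \<Longrightarrow> (x, x) \<in> le"
  using poset(2) unfolding partial_order_on_def preorder_on_def refl_on_def by auto
lemma trans': "(x, y) \<in> le \<Longrightarrow> (y, z) \<in> le \<Longrightarrow> (x, z) \<in> le"
  using poset(2) unfolding partial_order_on_def preorder_on_def trans_def by blast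
lemma leX: "(x, y) \<in> le \<Longrightarrow> x \<in> X \<and> y \<in> X"
  using poset(1) by auto

lemma aX: "x \<in> X \<Longrightarrow> \<alpha> x \<in> X"
  using alpha unfolding order_automorphism_def bij_betw_def by auto
lemma bX: "x \<in> X \<Longrightarrow> \<beta> x \<in> X"
  using beta unfolding dual_order_automorphism_def bij_betw_def by auto
lemma aiX: "y \<in> X \<Longrightarrow> ai y \<in> X"
  using alpha unfolding order_automorphism_def bij_betw_def ai_def
  by (metis inv_into_into)
lemma a_ai: "y \<in> X \<Longrightarrow> \<alpha> (ai y) = y"
  using alpha unfolding order_automorphism_def bij_betw_def ai_def
  by (simp add: f_inv_into_f)
lemma ai_a: "x \<in> X \<Longrightarrow> ai (\<alpha> x) = x"
  using alpha unfolding order_automorphism_def bij_betw_def ai_def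
  by simp
lemma a_mono: "x \<in> X \<Longrightarrow> y \<in> X \<Longrightarrow> (\<alpha> x, \<alpha> y) \<in> le \<longleftrightarrow> (x, y) \<in> le"
  using alpha unfolding order_automorphism_def by auto
lemma b_anti: "x \<in> X \<Longrightarrow> y \<in> X \<Longrightarrow> (\<beta> y, \<beta> x) \<in> le \<longleftrightarrow> (x, y) \<in> le"
  using beta unfolding dual_order_automorphism_def by auto
lemma bb: "x \<in> X \<Longrightarrow> \<beta> (\<beta> x) = x"
  using beta unfolding self_inverse_def by auto
lemma b_aba: "x \<in> X \<Longrightarrow> \<beta> x = \<alpha> (\<beta> (\<alpha> x))"
proof -
  assume x: "x \<in> X"
  have "(x, \<beta> x) \<in> fgraph X \<beta>" using x by (simp add: fgraph_mem)
  then have "(x, \<beta> x) \<in> fgraph X \<alpha> O fgraph X \<beta> O fgraph X \<alpha>" using beta_eq by simp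
  then show ?thesis by (auto simp: fgraph_mem)
qed
lemma baba: "x \<in> X \<Longrightarrow> \<beta> (\<alpha> (\<beta> (\<alpha> x))) = x"
proof -
  assume x: "x \<in> X"
  have "\<alpha> (\<beta> (\<alpha> x)) = \<beta> x" using b_aba[OF x] by simp
  then show ?thesis using bb[OF x] by simp
qed
lemma ai_b: "y \<in> X \<Longrightarrow> ai (\<beta> y) = \<beta> (\<alpha> y)"
proof -
  assume y: "y \<in> X"
  have "ai (\<beta> y) = ai (\<alpha> (\<beta> (\<alpha> y)))" using b_aba[OF y] by simp
  also have "\<dots> = \<beta> (\<alpha> y)" using ai_a[OF bX[OF aX[OF y]]] .
  finally show ?thesis .
qed

lemma Z_mem: "(x, y) \<in> Z \<longleftrightarrow> x \<in> X \<and> y \<in> X \<and> (y, \<alpha> x) \<notin> le"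
  unfolding Z_def by (auto simp: fgraph_mem rcomp_mem aX)

lemma inv_mem: "(x, y) \<in> inv R \<longleftrightarrow> x \<in> X \<and> y \<in> X \<and> (\<beta> (\<alpha> x), \<beta> y) \<notin> R"
proof
  assume "(x, y) \<in> inv R"
  then obtain w where "x \<in> X" "(\<beta> (\<alpha> x), w) \<in> rcomp X R" "y = \<beta> w"
    unfolding inv_def by (auto simp: fgraph_mem)
  then show "x \<in> X \<and> y \<in> X \<and> (\<beta> (\<alpha> x), \<beta> y) \<notin> R"
    by (auto simp: rcomp_mem bX bb)
next
  assume h: "x \<in> X \<and> y \<in> X \<and> (\<beta> (\<alpha> x), \<beta> y) \<notin> R"
  then have "(x, \<alpha> x) \<in> fgraph X \<alpha>" "(\<alpha> x, \<beta> (\<alpha> x)) \<in> fgraph X \<beta>"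
    "(\<beta> (\<alpha> x), \<beta> y) \<in> rcomp X R" "(\<beta> y, y) \<in> fgraph X \<beta>"
    by (auto simp: fgraph_mem rcomp_mem aX bX bb)
  then show "(x, y) \<in> inv R" unfolding inv_def by blast
qed

lemma up_le: "le \<in> Up X le"
  unfolding Up_mem using poset(1) trans' by blast

lemma up_Z: "Z \<in> Up X le"
  unfolding Up_mem
proof (intro conjI allI impI)
  show "Z \<subseteq> X \<times> X" by (auto simp: Z_mem)
next
  fix x y u v assume h: "(u, v) \<in> Z" "x \<in> X" "y \<in> X" "(x, u) \<in> le" "(v, y) \<in> le"
  then have u: "u \<in> X" "v \<in> X" "(v, \<alpha> u) \<notin> le" by (auto simp: Z_mem)
  have "(\<alpha> x, \<alpha> u) \<in> le" using h u a_mono by blast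
  then have "(y, \<alpha> x) \<notin> le" using u h trans' by blast
  then show "(x, y) \<in> Z" using h by (simp add: Z_mem)
qed

lemma UpX: "R \<in> Up X le \<Longrightarrow> R \<subseteq> X \<times> X"
  unfolding Up_mem by blast
lemma UpD: "R \<in> Up X le \<Longrightarrow> (u, v) \<in> R \<Longrightarrow> x \<in> X \<Longrightarrow> y \<in> X \<Longrightarrow> (x, u) \<in> le \<Longrightarrow> (v, y) \<in> le \<Longrightarrow> (x, y) \<in> R"
  unfolding Up_mem by blast
lemma UpI: "R \<subseteq> X \<times> X \<Longrightarrow> (\<And>x y u v. (u, v) \<in> R \<Longrightarrow> x \<in> X \<Longrightarrow> y \<in> X \<Longrightarrow> (x, u) \<in> le \<Longrightarrow> (v, y) \<in> le \<Longrightarrow> (x, y) \<in> R) \<Longrightarrow> R \<in> Up X le"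
  unfolding Up_mem by blast

lemma up_comp: assumes R: "R \<in> Up X le" and S: "S \<in> Up X le" shows "R O S \<in> Up X le"
proof (rule UpI)
  show "R O S \<subseteq> X \<times> X" using UpX[OF R] UpX[OF S] by blast
next
  fix x y u v assume h: "(u, v) \<in> R O S" "x \<in> X" "y \<in> X" "(x, u) \<in> le" "(v, y) \<in> le"
  then obtain w where w: "(u, w) \<in> R" "(w, v) \<in> S" by blast
  then have "w \<in> X" using UpX[OF R] by blast
  then have "(x, w) \<in> R" "(w, y) \<in> S" using UpD[OF R] UpD[OF S] h w refl by blast+
  then show "(x, y) \<in> R O S" by blast
qed

lemma up_int: "R \<in> Up X le \<Longrightarrow> S \<in> Up X le \<Longrightarrow> R \<inter> S \<in> Up X le"
  unfolding Up_mem by blast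
lemma up_un: "R \<in> Up X le \<Longrightarrow> S \<in> Up X le \<Longrightarrow> R \<union> S \<in> Up X le"
  unfolding Up_mem by blast

lemma up_ldiv: assumes R: "R \<in> Up X le" and S: "S \<in> Up X le" shows "rel_ldiv X R S \<in> Up X le"
proof (rule UpI)
  show "rel_ldiv X R S \<subseteq> X \<times> X" by (auto simp: rel_ldiv_def rcomp_def)
next
  fix x y u v assume h: "(u, v) \<in> rel_ldiv X R S" "x \<in> X" "y \<in> X" "(x, u) \<in> le" "(v, y) \<in> le"
  have "\<forall>z. (z, x) \<in> R \<longrightarrow> z \<in> X \<longrightarrow> (z, y) \<in> S"
  proof (intro allI impI)
    fix z assume z: "(z, x) \<in> R" "z \<in> X"
    then have "(z, u) \<in> R" using UpD[OF R] h refl leX by blast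
    then have "(z, v) \<in> S" using h z by (simp add: ldiv_mem)
    then show "(z, y) \<in> S" using UpD[OF S] h z refl by blast
  qed
  then show "(x, y) \<in> rel_ldiv X R S" using h by (simp add: ldiv_mem)
qed

lemma up_rdiv: assumes R: "R \<in> Up X le" and S: "S \<in> Up X le" shows "rel_rdiv X R S \<in> Up X le"
proof (rule UpI)
  show "rel_rdiv X R S \<subseteq> X \<times> X" by (auto simp: rel_rdiv_def rcomp_def)
next
  fix x y u v assume h: "(u, v) \<in> rel_rdiv X R S" "x \<in> X" "y \<in> X" "(x, u) \<in> le" "(v, y) \<in> le"
  have "\<forall>z. (y, z) \<in> S \<longrightarrow> z \<in> X \<longrightarrow> (x, z) \<in> R"
  proof (intro allI impI)
    fix z assume z: "(y, z) \<in> S" "z \<in> X"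
    then have "(v, z) \<in> S" using UpD[OF S] h refl leX by blast
    then have "(u, z) \<in> R" using h z by (simp add: rdiv_mem)
    then show "(x, z) \<in> R" using UpD[OF R] h z refl by blast
  qed
  then show "(x, y) \<in> rel_rdiv X R S" using h by (simp add: rdiv_mem)
qed

lemma up_inv: assumes R: "R \<in> Up X le" shows "inv R \<in> Up X le"
proof (rule UpI)
  show "inv R \<subseteq> X \<times> X" by (auto simp: inv_mem)
next
  fix x y u v assume h: "(u, v) \<in> inv R" "x \<in> X" "y \<in> X" "(x, u) \<in> le" "(v, y) \<in> le"
  then have uv: "u \<in> X" "v \<in> X" "(\<beta> (\<alpha> u), \<beta> v) \<notin> R" by (auto simp: inv_mem)
  have "(\<alpha> x, \<alpha> u) \<in> le" using h uv a_mono by blast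
  then have 1: "(\<beta> (\<alpha> u), \<beta> (\<alpha> x)) \<in> le" using h uv b_anti aX by blast
  have 2: "(\<beta> y, \<beta> v) \<in> le" using h uv b_anti by blast
  have "(\<beta> (\<alpha> x), \<beta> y) \<notin> R"
  proof
    assume "(\<beta> (\<alpha> x), \<beta> y) \<in> R"
    then have "(\<beta> (\<alpha> u), \<beta> v) \<in> R" using UpD[OF R] 1 2 uv aX bX by blast
    then show False using uv by blast
  qed
  then show "(x, y) \<in> inv R" using h by (simp add: inv_mem)
qed

lemma le_comp: assumes R: "R \<in> Up X le" shows "le O R = R"
proof
  show "le O R \<subseteq> R" using UpD[OF R] UpX[OF R] leX refl by blast
  show "R \<subseteq> le O R" using UpX[OF R] refl by blast
qed
lemma comp_le: assumes R: "R \<in> Up X le" shows "R O le = R"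
proof
  show "R O le \<subseteq> R" using UpD[OF R] UpX[OF R] leX refl by blast
  show "R \<subseteq> R O le" using UpX[OF R] refl by blast
qed

lemma resid1: "A \<subseteq> X \<times> X \<Longrightarrow> B \<subseteq> X \<times> X \<Longrightarrow> A O B \<subseteq> C \<longleftrightarrow> B \<subseteq> rel_ldiv X A C"
  unfolding rel_ldiv_def rcomp_def by blast
lemma resid2: "A \<subseteq> X \<times> X \<Longrightarrow> B \<subseteq> X \<times> X \<Longrightarrow> A O B \<subseteq> C \<longleftrightarrow> A \<subseteq> rel_rdiv X C B"
  unfolding rel_rdiv_def rcomp_def by blast

lemma lneg_mem: assumes R: "R \<in> Up X le"
  shows "(x, y) \<in> rel_ldiv X R Z \<longleftrightarrow> x \<in> X \<and> y \<in> X \<and> (ai y, x) \<notin> R"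
proof
  assume h: "(x, y) \<in> rel_ldiv X R Z"
  then have xy: "x \<in> X" "y \<in> X" and all: "\<forall>z. (z, x) \<in> R \<longrightarrow> z \<in> X \<longrightarrow> (z, y) \<in> Z"
    by (auto simp: ldiv_mem)
  have "(ai y, x) \<notin> R"
  proof
    assume "(ai y, x) \<in> R"
    then have "(ai y, y) \<in> Z" using all aiX xy by blast
    then show False using a_ai xy refl by (simp add: Z_mem)
  qed
  then show "x \<in> X \<and> y \<in> X \<and> (ai y, x) \<notin> R" using xy by blast
next
  assume h: "x \<in> X \<and> y \<in> X \<and> (ai y, x) \<notin> R"
  have "\<forall>z. (z, x) \<in> R \<longrightarrow> z \<in> X \<longrightarrow> (z, y) \<in> Z"
  proof (intro allI impI)
    fix z assume z: "(z, x) \<in> R" "z \<in> X"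
    show "(z, y) \<in> Z"
    proof (rule ccontr)
      assume "(z, y) \<notin> Z"
      then have "(y, \<alpha> z) \<in> le" using z h by (simp add: Z_mem)
      then have "(\<alpha> (ai y), \<alpha> z) \<in> le" using a_ai h by simp
      then have "(ai y, z) \<in> le" using a_mono aiX h z by blast
      then have "(ai y, x) \<in> R" using UpD[OF R z(1)] aiX h refl by blast
      then show False using h by blast
    qed
  qed
  then show "(x, y) \<in> rel_ldiv X R Z" using h by (simp add: ldiv_mem)
qed

lemma rneg_mem: assumes R: "R \<in> Up X le"
  shows "(x, y) \<in> rel_rdiv X Z R \<longleftrightarrow> x \<in> X \<and> y \<in> X \<and> (y, \<alpha> x) \<notin> R"
proof
  assume h: "(x, y) \<in> rel_rdiv X Z R"
  then have xy: "x \<in> X" "y \<in> X" and all: "\<forall>z. (y, z) \<in> R \<longrightarrow> z \<in> X \<longrightarrow> (x, z) \<in> Z"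
    by (auto simp: rdiv_mem)
  have "(y, \<alpha> x) \<notin> R"
  proof
    assume "(y, \<alpha> x) \<in> R"
    then have "(x, \<alpha> x) \<in> Z" using all aX xy by blast
    then show False using aX xy refl by (simp add: Z_mem)
  qed
  then show "x \<in> X \<and> y \<in> X \<and> (y, \<alpha> x) \<notin> R" using xy by blast
next
  assume h: "x \<in> X \<and> y \<in> X \<and> (y, \<alpha> x) \<notin> R"
  have "\<forall>z. (y, z) \<in> R \<longrightarrow> z \<in> X \<longrightarrow> (x, z) \<in> Z"
  proof (intro allI impI)
    fix z assume z: "(y, z) \<in> R" "z \<in> X"
    show "(x, z) \<in> Z"
    proof (rule ccontr)
      assume "(x, z) \<notin> Z"
      then have "(z, \<alpha> x) \<in> le" using z h by (simp add: Z_mem)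
      then have "(y, \<alpha> x) \<in> R" using UpD[OF R z(1)] aX h refl by blast
      then show False using h by blast
    qed
  qed
  then show "(x, y) \<in> rel_rdiv X Z R" using h by (simp add: rdiv_mem)
qed

lemma lneg_rneg: assumes R: "R \<in> Up X le" shows "rel_ldiv X (rel_rdiv X Z R) Z = R"
proof -
  have U: "rel_rdiv X Z R \<in> Up X le" using up_rdiv[OF up_Z R] .
  show ?thesis
  proof (rule set_eqI, clarify)
    fix x y
    show "(x, y) \<in> rel_ldiv X (rel_rdiv X Z R) Z \<longleftrightarrow> (x, y) \<in> R"
      using UpX[OF R] by (auto simp: lneg_mem[OF U] rneg_mem[OF R] aiX a_ai)
  qed
qed

lemma rneg_lneg: assumes R: "R \<in> Up X le" shows "rel_rdiv X Z (rel_ldiv X R Z) = R"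
proof -
  have U: "rel_ldiv X R Z \<in> Up X le" using up_ldiv[OF R up_Z] .
  show ?thesis
  proof (rule set_eqI, clarify)
    fix x y
    show "(x, y) \<in> rel_rdiv X Z (rel_ldiv X R Z) \<longleftrightarrow> (x, y) \<in> R"
      using UpX[OF R] by (auto simp: lneg_mem[OF R] rneg_mem[OF U] aX ai_a)
  qed
qed

lemma inv_inv: "inv (inv R) = R \<inter> X \<times> X"
  by (auto simp: inv_mem aX bX baba bb)

lemma inv_un: "inv (R \<union> S) = inv R \<inter> inv S"
  by (auto simp: inv_mem)

lemma inv_lneg: assumes R: "R \<in> Up X le" shows "inv (rel_ldiv X R Z) = rel_rdiv X Z (inv R)"
proof (rule set_eqI, clarify)
  fix x y
  show "(x, y) \<in> inv (rel_ldiv X R Z) \<longleftrightarrow> (x, y) \<in> rel_rdiv X Z (inv R)"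
    by (auto simp: inv_mem lneg_mem[OF R] rneg_mem[OF up_inv[OF R]] aX bX ai_b)
qed

lemma rneg_inv_mem: assumes S: "S \<in> Up X le"
  shows "(a, w) \<in> rel_rdiv X Z (inv S) \<longleftrightarrow> a \<in> X \<and> w \<in> X \<and> (\<beta> (\<alpha> w), \<beta> (\<alpha> a)) \<in> S"
  by (auto simp: rneg_mem[OF up_inv[OF S]] inv_mem aX)

lemma inv_comp: assumes R: "R \<in> Up X le" and S: "S \<in> Up X le"
  shows "inv (R O S) = rel_ldiv X (rel_rdiv X Z (inv S) O rel_rdiv X Z (inv R)) Z"
proof (rule set_eqI, clarify)
  fix x y
  have T: "rel_rdiv X Z (inv S) O rel_rdiv X Z (inv R) \<in> Up X le"
    by (intro up_comp up_rdiv up_Z up_inv R S)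
  have key: "x \<in> X \<Longrightarrow> y \<in> X \<Longrightarrow>
     (\<beta> (\<alpha> x), \<beta> y) \<in> R O S \<longleftrightarrow> (ai y, x) \<in> rel_rdiv X Z (inv S) O rel_rdiv X Z (inv R)"
  proof -
    assume x: "x \<in> X" and y: "y \<in> X"
    have e: "\<beta> (\<alpha> (ai y)) = \<beta> y" using a_ai y by simp
    show ?thesis
    proof
      assume "(\<beta> (\<alpha> x), \<beta> y) \<in> R O S"
      then obtain z where z: "(\<beta> (\<alpha> x), z) \<in> R" "(z, \<beta> y) \<in> S" by blast
      then have zX: "z \<in> X" using UpX[OF R] by blast
      define w where "w = ai (\<beta> z)"
      have wX: "w \<in> X" unfolding w_def using aiX bX zX by blast
      have bw: "\<beta> (\<alpha> w) = z" unfolding w_def using a_ai bX bb zX by simp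
      have "(ai y, w) \<in> rel_rdiv X Z (inv S)"
        using z e bw wX aiX y by (simp add: rneg_inv_mem[OF S])
      moreover have "(w, x) \<in> rel_rdiv X Z (inv R)"
        using z bw wX x by (simp add: rneg_inv_mem[OF R])
      ultimately show "(ai y, x) \<in> rel_rdiv X Z (inv S) O rel_rdiv X Z (inv R)" by blast
    next
      assume "(ai y, x) \<in> rel_rdiv X Z (inv S) O rel_rdiv X Z (inv R)"
      then obtain w where "(ai y, w) \<in> rel_rdiv X Z (inv S)" "(w, x) \<in> rel_rdiv X Z (inv R)" by blast
      then have "(\<beta> (\<alpha> w), \<beta> y) \<in> S" "(\<beta> (\<alpha> x), \<beta> (\<alpha> w)) \<in> R"
        using e by (auto simp: rneg_inv_mem[OF S] rneg_inv_mem[OF R])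
      then show "(\<beta> (\<alpha> x), \<beta> y) \<in> R O S" by blast
    qed
  qed
  show "(x, y) \<in> inv (R O S) \<longleftrightarrow> (x, y) \<in> rel_ldiv X (rel_rdiv X Z (inv S) O rel_rdiv X Z (inv R)) Z"
    using key by (auto simp: inv_mem lneg_mem[OF T])
qed

lemma inv_inv_up: "R \<in> Up X le \<Longrightarrow> inv (inv R) = R"
  using inv_inv UpX by blast

end

theorem corollary3p16:
  fixes X :: "'a set" and le :: "('a \<times> 'a) set" and \<alpha> \<beta> :: "'a \<Rightarrow> 'a"
  assumes poset: "le \<subseteq> X \<times> X" "partial_order_on X le"
    and alpha: "order_automorphism X le \<alpha>"
    and beta: "dual_order_automorphism X le \<beta>" "self_inverse X \<beta>"
    and beta_eq: "fgraph X \<beta> = fgraph X \<alpha> O fgraph X \<beta> O fgraph X \<alpha>"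
  defines "Z \<equiv> fgraph X \<alpha> O (rcomp X le)\<inverse>"
  shows "dqra_on (Up X le) (\<inter>) (\<union>) (O) le Z
           (\<lambda>R. rel_ldiv X R Z) (\<lambda>R. rel_rdiv X Z R)
           (\<lambda>R. fgraph X \<alpha> O fgraph X \<beta> O rcomp X R O fgraph X \<beta>)
           (rel_ldiv X) (rel_rdiv X)"
proof -
  interpret S: setting X le \<alpha> \<beta>
    using poset alpha beta beta_eq by (unfold_locales) auto
  have Zeq: "Z = S.Z" unfolding Z_def S.Z_def ..
  have inveq: "(\<lambda>R. fgraph X \<alpha> O fgraph X \<beta> O rcomp X R O fgraph X \<beta>) = S.inv"
    by (rule ext) (simp add: S.inv_def)
  show ?thesis
    unfolding Zeq inveq dqra_on_def qra_on_def residuated_lattice_on_def lattice_on_def lat_le_eq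
    apply (intro conjI ballI)
    apply (simp_all add: S.up_int S.up_un S.up_comp S.up_ldiv S.up_rdiv S.up_Z S.up_le S.up_inv
        S.le_comp S.comp_le S.lneg_rneg S.rneg_lneg S.inv_inv_up S.inv_un S.inv_lneg S.inv_comp
        S.UpX S.resid1 S.resid2 O_assoc Int_assoc Un_assoc Int_commute Un_commute Int_Un_distrib)
    apply (blast | metis S.resid1 S.resid2 S.UpX)+
    done
qed

end
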